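(* Let $0<a<b$, $n\ge1$, and consider the network $T_n$ defined in the context with any resistances $r_e=2^{d(e)-1}X_e$ where every $X_e\in[a,b]$. Let $\Theta^*$ be the unit current flow from the root $r$ to the set of leaves (the unique unit flow attaining the infimum in Thomson's principle $R_n=\inf_{\Theta}\sum_{e}r_e\Theta(e)^2$ over unit flows $\Theta$ from $r$ to the leaves), with $\Theta^*(e)$ denoting the flow through $e$ in the direction away from the root. Then for every edge $e$ of $T_n$, deterministically, $$\Theta^*(e)\le\frac{bn}{a\,(n-d(e)+1)\,2^{d(e)-1}}.$$
   Context: For $n\ge1$, $T_n$ is the edge-rooted tree consisting of a root vertex $r$ joined by a single edge to a vertex $v$, where $v$ is the root of a complete binary tree with $n-1$ levels (so $T_n$ has $2^{n-1}$ leaves at distance $n$ from $r$). The depth $d(e)$ of an edge $e$ is the number of edges on the path that starts with $e$ and ends at $r$; the edge at $r$ has depth $1$. $R_n$ is the effective resistance between $r$ and the set of leaves. A unit flow from $r$ to the leaves is an antisymmetric function on oriented edges with zero net flow at every vertex other than $r$ and the leaves, and net flow $1$ out of $r$ and $1$ into the set of leaves. *)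

theory Defs
  imports Complex_Main
begin

text \<open>The non-root vertices are the vertices of the complete binary
tree rooted at v, encoded as bool lists of length at most n-1: the empty list is v,
and the children of s are True#s and False#s. Leaves are the lists of length n-1.
Every edge of T_n is identified with its endpoint farther from the root r:
the list [] stands for the edge r--v, the list s for the edge parent(s)--s.\<close>

definition tn_edges :: "nat \<Rightarrow> bool list set" where
  "tn_edges n = {s. length s \<le> n - 1}"

definition tn_depth :: "bool list \<Rightarrow> nat" where
  "tn_depth s = length s + 1"

text \<open>A flow is given by its value on each edge in the direction away from the root
(the antisymmetric extension gives the value in the other direction). It is a unit
flow from r to the leaves iff the net flow out of r is 1 and flow is conserved at
every vertex other than r and the leaves (i.e. at v and all internal vertices).
The net flow into the set of leaves is then automatically 1.\<close>

definition tn_unit_flow :: "nat \<Rightarrow> (bool list \<Rightarrow> real) \<Rightarrow> bool" where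
  "tn_unit_flow n \<theta> \<longleftrightarrow>
     \<theta> [] = 1 \<and>
     (\<forall>s. length s < n - 1 \<longrightarrow> \<theta> s = \<theta> (True # s) + \<theta> (False # s))"

definition tn_energy :: "nat \<Rightarrow> (bool list \<Rightarrow> real) \<Rightarrow> (bool list \<Rightarrow> real) \<Rightarrow> real" where
  "tn_energy n X \<theta> = (\<Sum>e\<in>tn_edges n. 2 ^ (tn_depth e - 1) * X e * (\<theta> e)\<^sup>2)"

end

theory Submission
  imports Defs
begin

locale tns =
  fixes a b :: real and n :: nat and X \<theta> :: "bool list \<Rightarrow> real"
  assumes apos: "0 < a" and ab: "a < b" and n1: "n \<ge> 1"
    and Xb: "\<forall>e\<in>tn_edges n. a \<le> X e \<and> X e \<le> b"
    and uf: "tn_unit_flow n \<theta>"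
    and opt: "\<forall>\<Theta>'. tn_unit_flow n \<Theta>' \<longrightarrow> tn_energy n X \<theta> \<le> tn_energy n X \<Theta>'"
begin

definition "m = n - 1"
definition "rr s = 2 ^ length s * X s"
definition "E = tn_edges n"
definition "pth c = (\<lambda>k. replicate k True @ c) ` {..m - length c}"
definition "D c = (\<Sum>k\<le>m - length c. rr (replicate k True @ c) * \<theta> (replicate k True @ c))"

lemma E_alt: "E = {s. length s \<le> m}" by (simp add: E_def tn_edges_def m_def)

lemma finE: "finite E"
proof -
  have "E \<subseteq> {xs. set xs \<subseteq> UNIV \<and> length xs \<le> m}" by (auto simp: E_alt)
  moreover have "finite {xs. set xs \<subseteq> (UNIV::bool set) \<and> length xs \<le> m}"
    by (rule finite_lists_length_le) simp
  ultimately show ?thesis by (rule finite_subset)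
qed

lemma Xs: "length s \<le> m \<Longrightarrow> a \<le> X s \<and> X s \<le> b"
proof -
  assume "length s \<le> m"
  then have "s \<in> tn_edges n" using E_alt E_def by auto
  then show ?thesis using Xb by blast
qed

lemma rr_pos: "length s \<le> m \<Longrightarrow> rr s > 0"
  using Xs[of s] apos unfolding rr_def by simp

lemma energy_eq: "tn_energy n X \<phi> = (\<Sum>e\<in>E. rr e * (\<phi> e)\<^sup>2)"
  by (simp add: tn_energy_def E_def rr_def tn_depth_def)

lemma variational:
  assumes "\<psi> [] = 0" and "\<forall>s. length s < m \<longrightarrow> \<psi> s = \<psi> (True # s) + \<psi> (False # s)"
  shows "(\<Sum>e\<in>E. rr e * \<theta> e * \<psi> e) = 0"
proof -
  define B where "B = (\<Sum>e\<in>E. rr e * \<theta> e * \<psi> e)"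
  define C where "C = (\<Sum>e\<in>E. rr e * (\<psi> e)\<^sup>2)"
  define A where "A = (\<Sum>e\<in>E. rr e * (\<theta> e)\<^sup>2)"
  have C0: "C \<ge> 0" unfolding C_def
    proof (rule sum_nonneg)
    fix x assume "x \<in> E"
    then have "rr x > 0" using rr_pos E_alt by auto
    then show "0 \<le> rr x * (\<psi> x)\<^sup>2" by simp
  qed
  define \<epsilon> where "\<epsilon> = - B / (C + 1)"
  define \<phi> where "\<phi> = (\<lambda>s. \<theta> s + \<epsilon> * \<psi> s)"
  have "tn_unit_flow n \<phi>"
    using uf assms unfolding tn_unit_flow_def \<phi>_def m_def by (auto simp: algebra_simps)
  then have "tn_energy n X \<theta> \<le> tn_energy n X \<phi>" using opt by blast
  also have "tn_energy n X \<phi> = (\<Sum>e\<in>E. rr e * (\<theta> e)\<^sup>2 + 2 * \<epsilon> * (rr e * \<theta> e * \<psi> e) + \<epsilon>\<^sup>2 * (rr e * (\<psi> e)\<^sup>2))"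
    unfolding energy_eq \<phi>_def by (rule sum.cong) (auto simp: power2_eq_square algebra_simps)
  also have "\<dots> = A + 2 * \<epsilon> * B + \<epsilon>\<^sup>2 * C"
    by (simp add: A_def B_def C_def sum.distrib sum_distrib_left)
  finally have "A \<le> A + 2 * \<epsilon> * B + \<epsilon>\<^sup>2 * C" by (simp add: energy_eq A_def)
  then have ge: "0 \<le> 2 * \<epsilon> * B + \<epsilon>\<^sup>2 * C" by simp
  have eq1: "\<epsilon> * (C + 1) = - B" using C0 unfolding \<epsilon>_def by simp
  have "(C + 1)\<^sup>2 * (2 * \<epsilon> * B + \<epsilon>\<^sup>2 * C) = 2 * (\<epsilon> * (C + 1)) * B * (C + 1) + (\<epsilon> * (C + 1))\<^sup>2 * C"
    by algebra
  also have "\<dots> = B\<^sup>2 * (C - 2 * (C + 1))" unfolding eq1 by algebra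
  finally have "0 \<le> B\<^sup>2 * (C - 2 * (C + 1))" using ge by (metis zero_le_power2 mult_nonneg_nonneg)
  moreover have "C - 2 * (C + 1) < 0" using C0 by simp
  ultimately have "B\<^sup>2 \<le> 0" by (simp add: mult_le_0_iff zero_le_mult_iff)
  then show ?thesis unfolding B_def by simp
qed

lemma mem_pth: "u \<in> pth c \<longleftrightarrow> (\<exists>k. k \<le> m - length c \<and> u = replicate k True @ c)"
  unfolding pth_def by auto

lemma pth_len: "u \<in> pth c \<Longrightarrow> length c \<le> m \<Longrightarrow> length c \<le> length u \<and> length u \<le> m"
  unfolding mem_pth by auto

lemma pth_sub: "length c \<le> m \<Longrightarrow> pth c \<subseteq> E"
  using pth_len E_alt by auto

lemma sum_pth: "length c \<le> m \<Longrightarrow> (\<Sum>e\<in>pth c. rr e * \<theta> e) = D c"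
  unfolding pth_def D_def
  by (subst sum.reindex) (auto simp: inj_on_def dest: arg_cong[where f=length])

lemma memi: assumes "length u < m" "length t < m"
  shows "True # u \<in> pth (True # t) \<longleftrightarrow> u = t \<or> u \<in> pth (True # t)"
proof
  assume "True # u \<in> pth (True # t)"
  then obtain k where k: "k \<le> m - length (True#t)" "True # u = replicate k True @ True # t"
    unfolding mem_pth by blast
  show "u = t \<or> u \<in> pth (True # t)"
  proof (cases k)
    case 0 then show ?thesis using k by simp
  next
    case (Suc j) then show ?thesis using k unfolding mem_pth by auto
  qed
next
  assume h: "u = t \<or> u \<in> pth (True # t)"
  show "True # u \<in> pth (True # t)"
  proof (cases "u = t")
    case True then show ?thesis unfolding mem_pth by (intro exI[of _ 0]) simp
  next
    case False
    then obtain j where j: "j \<le> m - length (True#t)" "u = replicate j True @ True # t"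
      using h unfolding mem_pth by blast
    then have "Suc j \<le> m - length (True#t)" using assms by simp
    then show ?thesis unfolding mem_pth using j by (intro exI[of _ "Suc j"]) simp
  qed
qed

lemma memii: "False # u \<notin> pth (True # t)"
  unfolding mem_pth by (auto simp: Cons_eq_append_conv Cons_replicate_eq)

lemma memiii: assumes "length u < m" "length t < m"
  shows "True # u \<in> pth (False # t) \<longleftrightarrow> u \<in> pth (False # t)"
proof
  assume "True # u \<in> pth (False # t)"
  then obtain k where k: "k \<le> m - length (False#t)" "True # u = replicate k True @ False # t"
    unfolding mem_pth by blast
  show "u \<in> pth (False # t)"
  proof (cases k)
    case 0 then show ?thesis using k by simp
  next
    case (Suc j) then show ?thesis using k unfolding mem_pth by auto
  qed
next
  assume h: "u \<in> pth (False # t)"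
  then obtain j where j: "j \<le> m - length (False#t)" "u = replicate j True @ False # t"
    unfolding mem_pth by blast
  then have "Suc j \<le> m - length (False#t)" using assms by simp
  then show "True # u \<in> pth (False # t)" unfolding mem_pth using j by (intro exI[of _ "Suc j"]) simp
qed

lemma memiv: "False # u \<in> pth (False # t) \<longleftrightarrow> u = t"
proof
  assume "False # u \<in> pth (False # t)"
  then obtain k where k: "False # u = replicate k True @ False # t"
    unfolding mem_pth by blast
  then show "u = t" by (cases k) auto
next
  assume "u = t" then show "False # u \<in> pth (False # t)" unfolding mem_pth by (intro exI[of _ 0]) simp
qed

lemma memv: "t \<notin> pth (x # t)"
  unfolding mem_pth by (auto dest: arg_cong[where f=length])

lemma memnil: "[] \<notin> pth (x # t)"
  unfolding mem_pth by auto

lemma path_indep: assumes "length t < m"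
  shows "D (True # t) = D (False # t)"
proof -
  define \<psi> where "\<psi> = (\<lambda>u. (if u \<in> pth (True # t) then 1 else 0) - (if u \<in> pth (False # t) then 1 else (0::real)))"
  have "\<psi> [] = 0" using memnil unfolding \<psi>_def by simp
  moreover have "\<forall>s. length s < m \<longrightarrow> \<psi> s = \<psi> (True # s) + \<psi> (False # s)"
  proof (intro allI impI)
    fix s :: "bool list" assume s: "length s < m"
    show "\<psi> s = \<psi> (True # s) + \<psi> (False # s)"
      unfolding \<psi>_def memi[OF s assms] memiii[OF s assms] memiv
      using memv[of t True] memii[of s t] by auto
  qed
  ultimately have "(\<Sum>e\<in>E. rr e * \<theta> e * \<psi> e) = 0" by (rule variational)
  also have "(\<Sum>e\<in>E. rr e * \<theta> e * \<psi> e) =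
     (\<Sum>e\<in>E. if e \<in> pth (True # t) then rr e * \<theta> e else 0) - (\<Sum>e\<in>E. if e \<in> pth (False # t) then rr e * \<theta> e else 0)"
    unfolding \<psi>_def sum_subtractf[symmetric] by (rule sum.cong) auto
  also have "\<dots> = D (True # t) - D (False # t)"
    using assms pth_sub[of "True # t"] pth_sub[of "False # t"] finE
    by (simp add: sum.If_cases Int_absorb1 sum_pth)
  finally show ?thesis by simp
qed

lemma D_rec: assumes "length t < m" shows "D t = rr t * \<theta> t + D (True # t)"
proof -
  have e: "m - length t = Suc (m - length (True # t))" using assms by simp
  show ?thesis unfolding D_def e sum.atMost_Suc_shift
    by (simp add: replicate_app_Cons_same)
qed

lemma D_base: "length t = m \<Longrightarrow> D t = rr t * \<theta> t"
  unfolding D_def by simp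

lemma harm_lo: fixes L R1 R2 :: real
  assumes "0 < L" "L \<le> R1" "L \<le> R2" shows "L / 2 \<le> R1 * R2 / (R1 + R2)"
proof -
  have "L * (R1 + R2) \<le> 2 * (R1 * R2)"
  proof -
    have "0 \<le> R1 * (R2 - L) + R2 * (R1 - L)" using assms by (intro add_nonneg_nonneg mult_nonneg_nonneg) auto
    then show ?thesis by (simp add: algebra_simps)
  qed
  then show ?thesis using assms by (simp add: field_simps)
qed

lemma harm_hi: fixes U R1 R2 :: real
  assumes "0 < R1" "0 < R2" "R1 \<le> U" "R2 \<le> U" shows "R1 * R2 / (R1 + R2) \<le> U / 2"
proof -
  have "2 * (R1 * R2) \<le> U * (R1 + R2)"
  proof -
    have "0 \<le> R1 * (U - R2) + R2 * (U - R1)" using assms by (intro add_nonneg_nonneg mult_nonneg_nonneg) auto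
    then show ?thesis by (simp add: algebra_simps)
  qed
  then show ?thesis using assms by (simp add: field_simps)
qed

definition L :: "bool list \<Rightarrow> real" where "L t = real (m - length t + 1) * 2 ^ length t * a"
definition U :: "bool list \<Rightarrow> real" where "U t = real (m - length t + 1) * 2 ^ length t * b"

lemma L_pos: "L t > 0" unfolding L_def using apos by simp

lemma cons_flow: "length t < m \<Longrightarrow> \<theta> t = \<theta> (True # t) + \<theta> (False # t)"
  using uf unfolding tn_unit_flow_def m_def by blast

lemma ex_R: "m - length t = k \<Longrightarrow> length t \<le> m \<Longrightarrow> \<exists>R. L t \<le> R \<and> R \<le> U t \<and> D t = R * \<theta> t"
proof (induction k arbitrary: t)
  case 0
  then have "length t = m" by simp
  then show ?case using Xs[of t] D_base[of t] unfolding L_def U_def rr_def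
    by (intro exI[of _ "rr t"]) (auto simp: rr_def)
next
  case (Suc k)
  then have lt: "length t < m" by simp
  have k1: "m - length (True # t) = k" "length (True # t) \<le> m"
    "m - length (False # t) = k" "length (False # t) \<le> m" using Suc.prems by simp_all
  obtain R1 where R1: "L (True # t) \<le> R1" "R1 \<le> U (True # t)" "D (True # t) = R1 * \<theta> (True # t)"
    using Suc.IH[OF k1(1,2)] by blast
  obtain R2 where R2: "L (False # t) \<le> R2" "R2 \<le> U (False # t)" "D (False # t) = R2 * \<theta> (False # t)"
    using Suc.IH[OF k1(3,4)] by blast
  have Lc: "L (False # t) = L (True # t)" "U (False # t) = U (True # t)" unfolding L_def U_def by simp_all
  have p1: "R1 > 0" "R2 > 0" using R1 R2 L_pos[of "True # t"] L_pos[of "False # t"] by linarith+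
  define \<delta> where "\<delta> = D (True # t)"
  have d2: "D (False # t) = \<delta>" using path_indep[OF lt] \<delta>_def by simp
  define P where "P = R1 * R2 / (R1 + R2)"
  have th: "\<theta> t = \<delta> / R1 + \<delta> / R2"
    using cons_flow[OF lt] R1(3) R2(3) d2 \<delta>_def p1 by (simp add: field_simps)
  have th2: "\<delta> / R1 + \<delta> / R2 = \<delta> * (R1 + R2) / (R1 * R2)" using p1 by (simp add: field_simps)
  have "P * \<theta> t = \<delta>" unfolding th th2 P_def using p1 by simp
  then have Dt: "D t = (rr t + P) * \<theta> t" using D_rec[OF lt] \<delta>_def by (simp add: algebra_simps)
  have Plo: "L (True # t) / 2 \<le> P" unfolding P_def
    using harm_lo[OF L_pos R1(1)] R2(1) Lc by simp
  have Phi: "P \<le> U (True # t) / 2" unfolding P_def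
    using harm_hi[OF p1 R1(2)] R2(2) Lc by simp
  have Xt: "a \<le> X t" "X t \<le> b" using Xs[of t] lt by auto
  have Xt2: "2 ^ length t * a \<le> 2 ^ length t * X t" "2 ^ length t * X t \<le> 2 ^ length t * (b::real)"
    using Xt by simp_all
  have e1: "real (m - length (True # t) + 1) = real (m - length t)" using lt by simp
  have e2: "real (m - length t + 1) = real (m - length t) + 1" by simp
  have "L t \<le> rr t + P"
  proof -
    have "L t = 2 ^ length t * a + L (True # t) / 2"
      unfolding L_def e1 e2 by (simp add: algebra_simps)
    then show ?thesis using Plo Xt2 unfolding rr_def by linarith
  qed
  moreover have "rr t + P \<le> U t"
  proof -
    have "U t = 2 ^ length t * b + U (True # t) / 2"
      unfolding U_def e1 e2 by (simp add: algebra_simps)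
    then show ?thesis using Phi Xt2 unfolding rr_def by linarith
  qed
  ultimately show ?case using Dt by blast
qed

lemma R_of: "length t \<le> m \<Longrightarrow> \<exists>R. L t \<le> R \<and> R \<le> U t \<and> D t = R * \<theta> t"
  using ex_R by blast

lemma down: "length t \<le> m \<Longrightarrow> 0 \<le> D t \<and> D t \<le> D []"
proof (induction t)
  case Nil
  have ex0: "\<exists>R. L [] \<le> R \<and> R \<le> U [] \<and> D [] = R * \<theta> []" by (rule R_of) simp
  then obtain R where R: "L [] \<le> R" "D [] = R * \<theta> []" by blast
  have "\<theta> [] = 1" using uf unfolding tn_unit_flow_def by blast
  then show ?case using R L_pos[of "[]"] by simp
next
  case (Cons x t)
  then have lt: "length t < m" by simp
  have IH: "0 \<le> D t" "D t \<le> D []" using Cons by auto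
  obtain R where R: "L t \<le> R" "D t = R * \<theta> t" using R_of[of t] lt by auto
  have Rp: "R > 0" using R L_pos[of t] by linarith
  have th0: "\<theta> t \<ge> 0"
  proof (rule ccontr)
    assume "\<not> 0 \<le> \<theta> t"
    then have "R * \<theta> t < 0" using Rp by (simp add: mult_pos_neg)
    then show False using R IH by simp
  qed
  define \<delta> where "\<delta> = D (True # t)"
  have dx: "D (x # t) = \<delta>" using path_indep[OF lt] \<delta>_def by (cases x) auto
  obtain R1 where R1: "L (True # t) \<le> R1" "D (True # t) = R1 * \<theta> (True # t)"
    using R_of[of "True # t"] lt by auto
  obtain R2 where R2: "L (False # t) \<le> R2" "D (False # t) = R2 * \<theta> (False # t)"
    using R_of[of "False # t"] lt by auto
  have p1: "R1 > 0" "R2 > 0" using R1 R2 L_pos[of "True # t"] L_pos[of "False # t"] by linarith+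
  have d2: "D (False # t) = \<delta>" using path_indep[OF lt] \<delta>_def by simp
  have th: "\<theta> t = \<delta> / R1 + \<delta> / R2"
    using cons_flow[OF lt] R1(2) R2(2) d2 \<delta>_def p1 by (simp add: field_simps)
  have dpos: "\<delta> \<ge> 0"
  proof (rule ccontr)
    assume "\<not> 0 \<le> \<delta>"
    then have "\<delta> / R1 < 0" "\<delta> / R2 < 0" using p1 by (simp_all add: divide_neg_pos)
    then show False using th th0 by linarith
  qed
  have "rr t * \<theta> t \<ge> 0" using rr_pos[of t] lt th0 by simp
  then have "\<delta> \<le> D t" using D_rec[OF lt] \<delta>_def by simp
  then show ?case using dx dpos IH by simp
qed

lemma main: assumes "length e \<le> m" shows "\<theta> e \<le> real n * b / L e"
proof -
  obtain R where R: "L e \<le> R" "D e = R * \<theta> e" using R_of[OF assms] by auto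
  have ex0: "\<exists>R. L [] \<le> R \<and> R \<le> U [] \<and> D [] = R * \<theta> []" by (rule R_of) simp
  then obtain R0 where R0: "R0 \<le> U []" "D [] = R0 * \<theta> []" by blast
  have "\<theta> [] = 1" using uf unfolding tn_unit_flow_def by blast
  then have "D [] \<le> U []" using R0 by simp
  also have "U [] = real n * b" unfolding U_def m_def using n1 by simp
  finally have Dle: "D e \<le> real n * b" using down[OF assms] by linarith
  have Lp: "L e > 0" by (rule L_pos)
  then have Rp: "R > 0" using R by linarith
  have "\<theta> e = D e / R" using R Rp by simp
  also have "\<dots> \<le> real n * b / R" using Dle Rp by (simp add: divide_right_mono)
  also have "\<dots> \<le> real n * b / L e"
    using Lp R apos ab by (intro divide_left_mono) auto
  finally show ?thesis .
qed

end

theorem lemma6: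
  fixes a b :: real and n :: nat and X \<Theta> :: "bool list \<Rightarrow> real"
  assumes "0 < a" and "a < b" and "n \<ge> 1"
    and "\<forall>e\<in>tn_edges n. a \<le> X e \<and> X e \<le> b"
    and "tn_unit_flow n \<Theta>"
    and "\<forall>\<Theta>'. tn_unit_flow n \<Theta>' \<longrightarrow> tn_energy n X \<Theta> \<le> tn_energy n X \<Theta>'"
  shows "\<forall>e\<in>tn_edges n.
           \<Theta> e \<le> b * real n /
             (a * (real n - real (tn_depth e) + 1) * 2 ^ (tn_depth e - 1))"
proof
  interpret T: tns a b n X \<Theta> using assms by unfold_locales
  fix e assume e: "e \<in> tn_edges n"
  then have le: "length e \<le> T.m" unfolding T.m_def tn_edges_def by simp
  have "a * (real n - real (tn_depth e) + 1) * 2 ^ (tn_depth e - 1) = T.L e"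
    unfolding T.L_def tn_depth_def T.m_def using le assms(3) unfolding T.m_def
    by (simp add: of_nat_diff algebra_simps)
  then show "\<Theta> e \<le> b * real n / (a * (real n - real (tn_depth e) + 1) * 2 ^ (tn_depth e - 1))"
    using T.main[OF le] by (simp add: mult.commute)
qed

end
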